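(* Assume the standing setting below and run the DMFW algorithm with $\gamma_k=\frac{2}{k+1}$ and $\eta_k=\frac{2}{k+2}$. Then for every $i\in\mathcal N$ and $k\ge1$, $$\mathbb E\|y_k^i\|\le\psi.$$
   Context: Setting. There are $n$ agents $\mathcal N=\{1,\dots,n\}$ connected by a connected graph $\mathcal G=(\mathcal N,\mathcal E)$ with weight matrix $C=[c_{ij}]\in\mathbb R^{n\times n}$, where $c_{ij}\ge 0$ and $c_{ij}=0$ whenever $j\ne i$ and $(i,j)\notin\mathcal E$. $C$ is doubly stochastic, i.e. all row sums and all column sums equal $1$. Let $\lambda$ be the second largest eigenvalue of $C$ in magnitude. It is assumed that $|\lambda|<1$ and that for all vectors $x^1,\dots,x^n\in\mathbb R^p$, with $\bar x=\frac1n\sum_i x^i$ and $\hat x^i=\sum_j c_{ij}x^j$, one has $\big(\sum_i\|\hat x^i-\bar x\|^2\big)^{1/2}\le|\lambda|\big(\sum_i\|x^i-\bar x\|^2\big)^{1/2}$. Let $k_0$ be the smallest positive integer with $|\lambda|\le (k_0/(k_0+1))^2$. Problem data. $\mathcal X\subset\mathbb R^p$ is convex and compact with diameter $D$, i.e. $\|x-x'\|\le D$ for all $x,x'\in\mathcal X$. For each $i$, $\xi^i$ is a random variable. The function $f_i(\cdot,\xi)$ is differentiable with $L$-Lipschitz gradient for every $\xi$. $F_i(x)=\mathbb E[f_i(x,\xi^i)]$ is differentiable with $\nabla F_i(x)=\mathbb E[\nabla f_i(x,\xi^i)]$ and $L$-Lipschitz gradient. For all $x\in\mathcal X$ and $i$,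 $\mathbb E\|\nabla F_i(x)-\nabla f_i(x,\xi^i)\|^2\le\delta^2$. Set $F=\frac1n\sum_{i=1}^nF_i$. $G>0$ is a constant with $\mathbb E\|\nabla f_i(x,\xi^i)\|^2\le G^2$ and $\mathbb E\|\nabla f_i(x,\xi^i)\|\le G$ for all $x\in\mathcal X$ and $i\in\mathcal N$. DMFW algorithm. Fix step sizes $\gamma_k,\eta_k\in(0,1]$ and deterministic initial points $x_1^i\in\mathcal X$. The samples $\xi_k^i$ ($k\ge1$, $i\in\mathcal N$) are mutually independent, and $\xi_k^i$ has the distribution of $\xi^i$. For $k=1,2,\dots$ and each $i$: - $\hat x_k^i=\sum_{j=1}^n c_{ij}x_k^j$. - For $k=1$: $y_1^i=s_1^i=\nabla f_i(\hat x_1^i,\xi_1^i)$. For $k\ge2$: $y_k^i=(1-\gamma_k)y_{k-1}^i+\nabla f_i(\hat x_k^i,\xi_k^i)-(1-\gamma_k)\nabla f_i(\hat x_{k-1}^i,\xi_k^i)$ and $s_k^i=\sum_j c_{ij}s_{k-1}^j+y_k^i-y_{k-1}^i$. - $p_k^i=\sum_j c_{ij}s_k^j$. - $\theta_k^i\in\arg\min_{\phi\in\mathcal X}\langle p_k^i,\phi\rangle$. - $x_{k+1}^i=\hat x_k^i+\eta_k(\theta_k^i-\hat x_k^i)$. Constants: - $C_1=k_0\sqrt n D$. - $\psi=\max\{\max_i\mathbb E\|y_1^i\|,\ 2G+2L(D+2C_1)\}$. *)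

theory Defs
  imports "HOL-Probability.Probability" "Jordan_Normal_Form.Char_Poly"
begin

definition second_eig_mod :: "real mat \<Rightarrow> real" where
  "second_eig_mod C =
     rev (sorted_list_of_multiset
            (image_mset cmod (proots (char_poly (map_mat complex_of_real C))))) ! 1"

definition k0_of :: "real \<Rightarrow> nat" where
  "k0_of lam = (LEAST k::nat. 0 < k \<and> \<bar>lam\<bar> \<le> (real k / (real k + 1))\<^sup>2)"

end

theory Submission
  imports Defs
begin


lemma sq_bound:
  fixes v :: "nat \<Rightarrow> 'a::real_normed_vector"
  assumes "\<forall>i<n. norm (v i) \<le> D" "0 \<le> D"
  shows "sqrt (\<Sum>i<n. (norm (v i))\<^sup>2) \<le> sqrt (real n) * D"
proof -
  have "(\<Sum>i<n. (norm (v i))\<^sup>2) \<le> (\<Sum>i<n. D\<^sup>2)"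
    using assms by (intro sum_mono power_mono) auto
  also have "\<dots> = real n * D\<^sup>2" by simp
  finally have "sqrt (\<Sum>i<n. (norm (v i))\<^sup>2) \<le> sqrt (real n * D\<^sup>2)" by simp
  also have "\<dots> = sqrt (real n) * D" using assms(2) by (simp add: real_sqrt_mult)
  finally show ?thesis .
qed

lemma single_le:
  fixes v :: "nat \<Rightarrow> 'a::real_normed_vector"
  assumes "j < n"
  shows "norm (v j) \<le> sqrt (\<Sum>i<n. (norm (v i))\<^sup>2)"
proof -
  have "(norm (v j))\<^sup>2 \<le> (\<Sum>i<n. (norm (v i))\<^sup>2)"
    using assms by (intro member_le_sum) auto
  then show ?thesis by (rule real_le_rsqrt)
qed

lemma l2_tri:
  fixes u w :: "nat \<Rightarrow> 'a::real_normed_vector"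
  assumes "0 \<le> a" "0 \<le> b"
  shows "sqrt (\<Sum>i<n. (norm (a *\<^sub>R u i + b *\<^sub>R w i))\<^sup>2)
     \<le> a * sqrt (\<Sum>i<n. (norm (u i))\<^sup>2) + b * sqrt (\<Sum>i<n. (norm (w i))\<^sup>2)"
proof -
  have "sqrt (\<Sum>i<n. (norm (a *\<^sub>R u i + b *\<^sub>R w i))\<^sup>2) = L2_set (\<lambda>i. norm (a *\<^sub>R u i + b *\<^sub>R w i)) {..<n}"
    by (simp add: L2_set_def)
  also have "\<dots> \<le> L2_set (\<lambda>i. a * norm (u i) + b * norm (w i)) {..<n}"
    using assms by (intro L2_set_mono) (auto intro: order_trans[OF norm_triangle_ineq])
  also have "\<dots> \<le> L2_set (\<lambda>i. a * norm (u i)) {..<n} + L2_set (\<lambda>i. b * norm (w i)) {..<n}"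
    by (rule L2_set_triangle_ineq)
  also have "\<dots> = a * L2_set (\<lambda>i. norm (u i)) {..<n} + b * L2_set (\<lambda>i. norm (w i)) {..<n}"
    using assms by (simp add: L2_set_right_distrib)
  finally show ?thesis by (simp add: L2_set_def)
qed

lemma consensus:
  fixes xx xh th :: "nat \<Rightarrow> nat \<Rightarrow> 'a::real_normed_vector"
    and c :: "nat \<Rightarrow> nat \<Rightarrow> real"
  assumes n: "0 < n"
   and cn: "\<forall>i<n. \<forall>j<n. 0 \<le> c i j"
   and crow: "\<forall>i<n. (\<Sum>j<n. c i j) = 1"
   and ccol: "\<forall>j<n. (\<Sum>i<n. c i j) = 1"
   and contr: "\<forall>z::nat \<Rightarrow> 'a. sqrt (\<Sum>i<n. (norm ((\<Sum>j<n. c i j *\<^sub>R z j) - (\<Sum>l<n. z l) /\<^sub>R real n))\<^sup>2)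
        \<le> r * sqrt (\<Sum>i<n. (norm (z i - (\<Sum>l<n. z l) /\<^sub>R real n))\<^sup>2)"
   and r0: "0 \<le> r" and rk: "r \<le> (real kk / (real kk + 1))\<^sup>2" and kk: "1 \<le> kk"
   and cvx: "convex X" and diam: "\<forall>u\<in>X. \<forall>v\<in>X. norm (u - v) \<le> D"
   and x1: "\<forall>j<n. xx 1 j \<in> X"
   and xhd: "\<forall>k\<ge>1. \<forall>i<n. xh k i = (\<Sum>j<n. c i j *\<^sub>R xx k j)"
   and thX: "\<forall>k\<ge>1. \<forall>i<n. th k i \<in> X"
   and xs: "\<forall>k\<ge>1. \<forall>i<n. xx (k+1) i = xh k i + (2 / (real k + 2)) *\<^sub>R (th k i - xh k i)"
  shows "(\<forall>k\<ge>1. \<forall>i<n. xh k i \<in> X) \<and> (\<forall>m\<ge>1. \<forall>i<n. real m * norm (xh (m+1) i - xh m i) \<le> 2*D + 8*(real kk * sqrt (real n) * D))"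
proof -
  define \<eta> where "\<eta> k = 2 / (real k + 2)" for k :: nat
  have eta01: "0 \<le> \<eta> k" "\<eta> k \<le> 1" for k unfolding \<eta>_def by auto
  have xhX: "xh k i \<in> X" if "k\<ge>1" "i<n" "\<forall>j<n. xx k j \<in> X" for k i
    using convex_sum[of "{..<n}" X "c i" "xx k"] that cvx cn crow xhd by auto
  have xX: "\<forall>j<n. xx k j \<in> X" if "k \<ge> 1" for k
    using that
  proof (induction k rule: nat_induct_at_least)
    case base then show ?case using x1 by simp
  next
    case (Suc k)
    show ?case
    proof (intro allI impI)
      fix j assume j: "j < n"
      have "xx (Suc k) j = (1 - \<eta> k) *\<^sub>R xh k j + \<eta> k *\<^sub>R th k j"
        using xs Suc.hyps j unfolding \<eta>_def by (simp add: algebra_simps)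
      also have "\<dots> \<in> X"
        using convexD[OF cvx xhX[OF Suc.hyps j Suc.IH] thX[rule_format, OF Suc.hyps j]] eta01 by auto
      finally show "xx (Suc k) j \<in> X" .
    qed
  qed
  have D0: "0 \<le> D" using x1 diam n by (metis norm_ge_zero order_trans)
  define xb where "xb k = (\<Sum>l<n. xx k l) /\<^sub>R real n" for k
  define tb where "tb k = (\<Sum>l<n. th k l) /\<^sub>R real n" for k
  have avgX: "(\<Sum>l<n. v l) /\<^sub>R real n \<in> X" if "\<forall>l<n. v l \<in> X" for v
  proof -
    have "(\<Sum>l<n. (1 / real n) *\<^sub>R v l) \<in> X"
      using convex_sum[of "{..<n}" X "\<lambda>_. 1 / real n" v] that cvx n by auto
    then show ?thesis by (simp add: scaleR_sum_right[symmetric] divide_inverse_commute)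
  qed
  have xbX: "xb k \<in> X" if "k \<ge> 1" for k using avgX xX[OF that] unfolding xb_def by blast
  have tbX: "tb k \<in> X" if "k \<ge> 1" for k using avgX thX that unfolding tb_def by blast
  define e where "e k = sqrt (\<Sum>i<n. (norm (xx k i - xb k))\<^sup>2)" for k
  define Eh where "Eh k = sqrt (\<Sum>i<n. (norm (xh k i - xb k))\<^sup>2)" for k
  define T where "T k = sqrt (\<Sum>i<n. (norm (th k i - tb k))\<^sup>2)" for k
  define U where "U = sqrt (real n) * D"
  have U0: "0 \<le> U" unfolding U_def using D0 by simp
  have sumxh: "(\<Sum>i<n. xh k i) = (\<Sum>l<n. xx k l)" if "k \<ge> 1" for k
  proof -
    have "(\<Sum>i<n. xh k i) = (\<Sum>i<n. \<Sum>j<n. c i j *\<^sub>R xx k j)" using xhd that by simp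
    also have "\<dots> = (\<Sum>j<n. \<Sum>i<n. c i j *\<^sub>R xx k j)" by (rule sum.swap)
    also have "\<dots> = (\<Sum>j<n. (\<Sum>i<n. c i j) *\<^sub>R xx k j)" by (simp add: scaleR_sum_left)
    also have "\<dots> = (\<Sum>l<n. xx k l)" using ccol by simp
    finally show ?thesis .
  qed
  have Eh_le: "Eh k \<le> r * e k" if "k \<ge> 1" for k
    using contr[rule_format, of "xx k"] xhd that unfolding Eh_def e_def xb_def by simp
  have e0: "0 \<le> e k" for k unfolding e_def by (simp add: sum_nonneg)
  have eU: "e k \<le> U" if "k \<ge> 1" for k
    unfolding e_def U_def using xX[OF that] xbX[OF that] diam D0 by (intro sq_bound) auto
  have TU: "T k \<le> U" if "k \<ge> 1" for k
    unfolding T_def U_def using thX that tbX[OF that] diam D0 by (intro sq_bound) auto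
  have e_step: "e (k+1) \<le> (1 - \<eta> k) * Eh k + \<eta> k * T k" if k: "k \<ge> 1" for k
  proof -
    have xk: "xx (k+1) i = (1 - \<eta> k) *\<^sub>R xh k i + \<eta> k *\<^sub>R th k i" if "i < n" for i
      using xs k that unfolding \<eta>_def by (simp add: algebra_simps)
    have "(\<Sum>i<n. xx (k+1) i) = (\<Sum>i<n. (1 - \<eta> k) *\<^sub>R xh k i + \<eta> k *\<^sub>R th k i)"
      using xk by simp
    also have "\<dots> = (1 - \<eta> k) *\<^sub>R (\<Sum>i<n. xh k i) + \<eta> k *\<^sub>R (\<Sum>i<n. th k i)"
      by (simp add: sum.distrib scaleR_sum_right)
    finally have "xb (k+1) = (1 - \<eta> k) *\<^sub>R xb k + \<eta> k *\<^sub>R tb k"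
      unfolding xb_def tb_def using sumxh[OF k] by (simp add: scaleR_right_distrib mult.commute)
    then have "xx (k+1) i - xb (k+1) = (1 - \<eta> k) *\<^sub>R (xh k i - xb k) + \<eta> k *\<^sub>R (th k i - tb k)"
      if "i < n" for i using xk[OF that] by (simp add: algebra_simps)
    then have "e (k+1) = sqrt (\<Sum>i<n. (norm ((1 - \<eta> k) *\<^sub>R (xh k i - xb k) + \<eta> k *\<^sub>R (th k i - tb k)))\<^sup>2)"
      unfolding e_def by simp
    also have "\<dots> \<le> (1 - \<eta> k) * Eh k + \<eta> k * T k"
      unfolding Eh_def T_def using eta01 by (intro l2_tri) auto
    finally show ?thesis .
  qed
  have r1: "r \<le> real kk / (real kk + 1)"
  proof -
    have "(real kk / (real kk + 1))\<^sup>2 \<le> real kk / (real kk + 1)"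
    proof -
      show ?thesis unfolding power2_eq_square by (rule mult_left_le_one_le) auto
    qed
    then show ?thesis using rk by simp
  qed
  have rle1: "r \<le> 1"
  proof -
    have "real kk / (real kk + 1) \<le> 1" by simp
    then show ?thesis using r1 by linarith
  qed
  have rkey: "r * (4 * real kk) + 2 \<le> 4 * real kk"
  proof -
    have "r * (4 * real kk) \<le> real kk / (real kk + 1) * (4 * real kk)"
      using r1 by (intro mult_right_mono) auto
    also have "\<dots> \<le> 4 * real kk - 2"
      using kk by (simp add: field_simps)
    finally show ?thesis by simp
  qed
  have ebound: "real m * e m \<le> 4 * real kk * U" if "m \<ge> 1" for m
    using that
  proof (induction m rule: nat_induct_at_least)
    case base
    have "1 * U \<le> (4*real kk) * U" using kk U0 by (intro mult_right_mono) auto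
    then show ?case using eU[of 1] by simp
  next
    case (Suc m)
    have em: "r * (real m * e m) \<le> r * (4 * real kk * U)" using Suc.IH r0 by (rule mult_left_mono)
    have "e (m+1) \<le> (1 - \<eta> m) * (r * e m) + \<eta> m * U"
    proof -
      have "(1 - \<eta> m) * Eh m \<le> (1 - \<eta> m) * (r * e m)"
        using Eh_le[OF Suc.hyps] eta01[of m] by (intro mult_left_mono) auto
      moreover have "\<eta> m * T m \<le> \<eta> m * U"
        using TU[OF Suc.hyps] eta01[of m] by (intro mult_left_mono) auto
      ultimately show ?thesis using e_step[OF Suc.hyps] by linarith
    qed
    also have "\<dots> = (r * (real m * e m) + 2 * U) / (real m + 2)"
    proof -
      have "1 - \<eta> m = real m / (real m + 2)" unfolding \<eta>_def by (simp add: field_simps)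
      then show ?thesis unfolding \<eta>_def by (simp add: add_divide_distrib)
    qed
    also have "\<dots> \<le> (r * (4 * real kk * U) + 2 * U) / (real m + 2)"
      using em by (intro divide_right_mono) auto
    also have "\<dots> \<le> 4 * real kk * U / (real m + 2)"
    proof (intro divide_right_mono)
      have "r * (4 * real kk * U) + 2 * U = (r * (4 * real kk) + 2) * U" by (simp add: algebra_simps)
      also have "\<dots> \<le> (4 * real kk) * U" using rkey U0 by (rule mult_right_mono)
      finally show "r * (4 * real kk * U) + 2 * U \<le> 4 * real kk * U" .
    qed auto
    finally have "real (Suc m) * e (Suc m) \<le> real (Suc m) * (4 * real kk * U / (real m + 2))"
      by (intro mult_left_mono) auto
    also have "\<dots> \<le> 4 * real kk * U"
      using U0 by (simp add: field_simps)
    finally show ?case .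
  qed
  have xhX_all: "\<forall>k\<ge>1. \<forall>i<n. xh k i \<in> X" using xhX xX by blast
  have main: "\<forall>m\<ge>1. \<forall>i<n. real m * norm (xh (m+1) i - xh m i) \<le> 2*D + 8*(real kk * sqrt (real n) * D)"
  proof (intro allI impI)
    fix m i :: nat assume m: "m \<ge> 1" and i: "i < n"
    have xhm: "xh m j \<in> X" if "j < n" for j using xhX[OF m that xX[OF m]] .
    have "xh (m+1) i = (\<Sum>j<n. c i j *\<^sub>R (xh m j + \<eta> m *\<^sub>R (th m j - xh m j)))"
      using xhd xs m i unfolding \<eta>_def by simp
    also have "\<dots> = (\<Sum>j<n. c i j *\<^sub>R (xh m j - xb m) + c i j *\<^sub>R xb m + \<eta> m *\<^sub>R (c i j *\<^sub>R (th m j - xh m j)))"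
      by (rule sum.cong) (auto simp: algebra_simps)
    also have "\<dots> = (\<Sum>j<n. c i j *\<^sub>R (xh m j - xb m)) + (\<Sum>j<n. c i j) *\<^sub>R xb m
                   + \<eta> m *\<^sub>R (\<Sum>j<n. c i j *\<^sub>R (th m j - xh m j))"
      by (simp only: sum.distrib scaleR_sum_right scaleR_sum_left)
    finally have eq: "xh (m+1) i - xh m i = (\<Sum>j<n. c i j *\<^sub>R (xh m j - xb m)) - (xh m i - xb m)
                   + \<eta> m *\<^sub>R (\<Sum>j<n. c i j *\<^sub>R (th m j - xh m j))"
      using crow i by simp
    have n1: "norm (\<Sum>j<n. c i j *\<^sub>R (xh m j - xb m)) \<le> Eh m"
    proof -
      have "norm (\<Sum>j<n. c i j *\<^sub>R (xh m j - xb m)) \<le> (\<Sum>j<n. c i j * Eh m)"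
        using cn i single_le[of _ n "\<lambda>j. xh m j - xb m"] unfolding Eh_def
        by (intro order_trans[OF norm_sum] sum_mono) (auto intro: mult_left_mono)
      also have "\<dots> = Eh m" using crow i by (simp add: sum_distrib_right[symmetric])
      finally show ?thesis .
    qed
    have n2: "norm (xh m i - xb m) \<le> Eh m" using single_le[OF i, of "\<lambda>j. xh m j - xb m"] unfolding Eh_def .
    have n3: "norm (\<Sum>j<n. c i j *\<^sub>R (th m j - xh m j)) \<le> D"
    proof -
      have "norm (\<Sum>j<n. c i j *\<^sub>R (th m j - xh m j)) \<le> (\<Sum>j<n. c i j * D)"
        using cn i diam thX m xhm
        by (intro order_trans[OF norm_sum] sum_mono) (auto intro: mult_left_mono)
      also have "\<dots> = D" using crow i by (simp add: sum_distrib_right[symmetric])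
      finally show ?thesis .
    qed
    have "norm (xh (m+1) i - xh m i) \<le> Eh m + Eh m + \<eta> m * D"
      unfolding eq using n1 n2 n3 eta01[of m]
      by (smt (verit, best) mult_left_mono norm_scaleR norm_triangle_ineq norm_triangle_ineq4 abs_of_nonneg)
    also have "\<dots> \<le> 2 * e m + \<eta> m * D"
      using Eh_le[OF m] rle1 e0[of m] by (smt (verit) mult_left_le_one_le r0)
    finally have "real m * norm (xh (m+1) i - xh m i) \<le> real m * (2 * e m + \<eta> m * D)"
      by (intro mult_left_mono) auto
    also have "\<dots> = 2 * (real m * e m) + (2 * real m / (real m + 2)) * D"
      unfolding \<eta>_def by (simp add: algebra_simps)
    also have "\<dots> \<le> 2 * (4 * real kk * U) + 2 * D"
      using ebound[OF m] D0 by (intro add_mono mult_right_mono) (auto simp: field_simps)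
    finally show "real m * norm (xh (m+1) i - xh m i) \<le> 2*D + 8*(real kk * sqrt (real n) * D)"
      unfolding U_def by simp
  qed
  show ?thesis by (rule conjI[OF xhX_all main])
qed


lemma rec_bound:
  fixes Y h :: "nat \<Rightarrow> 'm \<Rightarrow> real" and M :: "'m measure"
  assumes M: "prob_space M"
    and h: "\<forall>k\<ge>1. integrable M (h k)"
    and Y0: "\<forall>k. \<forall>\<omega>\<in>space M. 0 \<le> Y k \<omega>"
    and Y1: "\<forall>\<omega>\<in>space M. Y 1 \<omega> \<le> h 1 \<omega>"
    and E1: "integral\<^sup>L M (h 1) \<le> \<psi>"
    and Yk: "\<forall>k\<ge>2. \<forall>\<omega>\<in>space M. Y k \<omega> \<le> (1 - g k) * Y (k - 1) \<omega> + g k * h k \<omega> + q k"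
    and g: "\<forall>k\<ge>2. 0 \<le> g k \<and> g k \<le> 1"
    and Ek: "\<forall>k\<ge>2. g k * integral\<^sup>L M (h k) + q k \<le> g k * \<psi>"
  shows "\<forall>k\<ge>1. (\<integral>\<^sup>+ \<omega>. ennreal (Y k \<omega>) \<partial>M) \<le> ennreal \<psi>"
proof -
  interpret prob_space M by (rule M)
  have ex: "\<exists>Z. integrable M Z \<and> (\<forall>\<omega>\<in>space M. Y k \<omega> \<le> Z \<omega>) \<and> integral\<^sup>L M Z \<le> \<psi>"
    if "k \<ge> 1" for k
    using that
  proof (induction k rule: nat_induct_at_least)
    case base
    then show ?case using h Y1 E1 by auto
  next
    case (Suc k)
    then obtain Z where Z: "integrable M Z" "\<forall>\<omega>\<in>space M. Y k \<omega> \<le> Z \<omega>" "integral\<^sup>L M Z \<le> \<psi>"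
      by blast
    have k2: "Suc k \<ge> 2" using Suc.hyps by simp
    have g': "0 \<le> g (Suc k)" "g (Suc k) \<le> 1" using g k2 by auto
    define Z' where "Z' = (\<lambda>\<omega>. (1 - g (Suc k)) * Z \<omega> + g (Suc k) * h (Suc k) \<omega> + q (Suc k))"
    have hi: "integrable M (h (Suc k))" using h by simp
    have iZ': "integrable M Z'" unfolding Z'_def using Z(1) hi by auto
    have "\<forall>\<omega>\<in>space M. Y (Suc k) \<omega> \<le> Z' \<omega>"
    proof
      fix \<omega> assume \<omega>: "\<omega> \<in> space M"
      have "Y (Suc k) \<omega> \<le> (1 - g (Suc k)) * Y k \<omega> + g (Suc k) * h (Suc k) \<omega> + q (Suc k)"
        using Yk k2 \<omega> by fastforce
      also have "\<dots> \<le> Z' \<omega>" unfolding Z'_def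
        using Z(2) \<omega> g' by (simp add: mult_left_mono)
      finally show "Y (Suc k) \<omega> \<le> Z' \<omega>" .
    qed
    moreover have "integral\<^sup>L M Z' = (1 - g (Suc k)) * integral\<^sup>L M Z + g (Suc k) * integral\<^sup>L M (h (Suc k)) + q (Suc k)"
      unfolding Z'_def using Z(1) hi by (simp add: prob_space)
    moreover have "(1 - g (Suc k)) * integral\<^sup>L M Z \<le> (1 - g (Suc k)) * \<psi>"
      using Z(3) g' by (intro mult_left_mono) auto
    moreover have "g (Suc k) * integral\<^sup>L M (h (Suc k)) + q (Suc k) \<le> g (Suc k) * \<psi>"
      using Ek k2 by blast
    ultimately show ?case using iZ' by (intro exI[of _ Z']) (auto simp: algebra_simps)
  qed
  show ?thesis
  proof (intro allI impI)
    fix k :: nat assume k: "k \<ge> 1"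
    obtain Z where Z: "integrable M Z" "\<forall>\<omega>\<in>space M. Y k \<omega> \<le> Z \<omega>" "integral\<^sup>L M Z \<le> \<psi>"
      using ex[OF k] by blast
    have "(\<integral>\<^sup>+ \<omega>. ennreal (Y k \<omega>) \<partial>M) \<le> (\<integral>\<^sup>+ \<omega>. ennreal (Z \<omega>) \<partial>M)"
      using Z(2) by (intro nn_integral_mono ennreal_leI) auto
    also have "\<dots> = ennreal (integral\<^sup>L M Z)"
      using Z(1) Z(2) Y0 by (intro nn_integral_eq_integral AE_I2) (auto intro: order_trans)
    also have "\<dots> \<le> ennreal \<psi>" using Z(3) by (rule ennreal_leI)
    finally show "(\<integral>\<^sup>+ \<omega>. ennreal (Y k \<omega>) \<partial>M) \<le> ennreal \<psi>" .
  qed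
qed


lemma k0_exists:
  assumes "\<bar>lam\<bar> < 1"
  shows "0 < k0_of lam \<and> \<bar>lam\<bar> \<le> (real (k0_of lam) / (real (k0_of lam) + 1))\<^sup>2"
proof -
  obtain k :: nat where k: "2 / (1 - \<bar>lam\<bar>) \<le> real k" using real_arch_simple by blast
  define K where "K = Suc k"
  have K0: "real K > 0" unfolding K_def by simp
  have "2 / (1 - \<bar>lam\<bar>) \<le> real K" using k unfolding K_def by simp
  then have "2 \<le> real K * (1 - \<bar>lam\<bar>)" using assms by (simp add: divide_le_eq mult.commute)
  then have "2 / real K \<le> 1 - \<bar>lam\<bar>" using K0 by (simp add: divide_le_eq mult.commute)
  moreover have "2 / (real K + 1) \<le> 2 / real K" using K0 by (intro divide_left_mono) auto
  moreover have "1 - 2 / (real K + 1) \<le> (real K / (real K + 1))\<^sup>2"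
  proof -
    define t where "t = 1 / (real K + 1)"
    have t: "real K / (real K + 1) = 1 - t" unfolding t_def using K0 by (simp add: field_simps)
    have "1 - 2 * t \<le> (1 - t)\<^sup>2" using zero_le_square[of t] by (simp add: power2_eq_square algebra_simps)
    then show ?thesis unfolding t by (simp add: t_def)
  qed
  ultimately have "0 < K \<and> \<bar>lam\<bar> \<le> (real K / (real K + 1))\<^sup>2" unfolding K_def by simp
  then show ?thesis unfolding k0_of_def by (rule LeastI)
qed


theorem lemma8:
  fixes M :: "'m measure" and S :: "'b measure"
    and n :: nat and E :: "(nat \<times> nat) set" and C :: "real mat"
    and X :: "'a::euclidean_space set" and D L \<delta> G :: real
    and f :: "nat \<Rightarrow> 'a \<Rightarrow> 'b \<Rightarrow> real"
    and gf :: "nat \<Rightarrow> 'a \<Rightarrow> 'b \<Rightarrow> 'a"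
    and \<xi> :: "nat \<Rightarrow> 'm \<Rightarrow> 'b"
    and \<xi>s :: "nat \<Rightarrow> nat \<Rightarrow> 'm \<Rightarrow> 'b"
    and x1 :: "nat \<Rightarrow> 'a"
    and x xh y s p \<theta> :: "nat \<Rightarrow> nat \<Rightarrow> 'm \<Rightarrow> 'a"
    and \<gamma> \<eta> :: "nat \<Rightarrow> real"
  assumes M: "prob_space M"
    \<comment> \<open>communication graph: undirected, connected, on agents 0..n-1\<close>
    and n_pos: "0 < n"
    and E_sub: "E \<subseteq> {..<n} \<times> {..<n}"
    and E_sym: "sym E"
    and E_conn: "\<forall>i<n. \<forall>j<n. (i, j) \<in> E\<^sup>*"
    \<comment> \<open>weight matrix\<close>
    and C_dim: "C \<in> carrier_mat n n"
    and C_nonneg: "\<forall>i<n. \<forall>j<n. 0 \<le> C $$ (i, j)"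
    and C_supp: "\<forall>i<n. \<forall>j<n. j \<noteq> i \<and> (i, j) \<notin> E \<longrightarrow> C $$ (i, j) = 0"
    and C_row: "\<forall>i<n. (\<Sum>j<n. C $$ (i, j)) = 1"
    and C_col: "\<forall>j<n. (\<Sum>i<n. C $$ (i, j)) = 1"
    and lam_lt1: "\<bar>second_eig_mod C\<bar> < 1"
    and contr: "\<forall>z :: nat \<Rightarrow> 'a.
       sqrt (\<Sum>i<n. (norm ((\<Sum>j<n. C $$ (i, j) *\<^sub>R z j) - (\<Sum>l<n. z l) /\<^sub>R real n))\<^sup>2)
       \<le> \<bar>second_eig_mod C\<bar> * sqrt (\<Sum>i<n. (norm (z i - (\<Sum>l<n. z l) /\<^sub>R real n))\<^sup>2)"
    \<comment> \<open>constraint set\<close>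
    and X_convex: "convex X" and X_compact: "compact X" and X_ne: "X \<noteq> {}"
    and X_diam: "\<forall>u\<in>X. \<forall>v\<in>X. norm (u - v) \<le> D"
    \<comment> \<open>random variables and stochastic gradients\<close>
    and xi_rv: "\<forall>i<n. \<xi> i \<in> measurable M S"
    and gf_meas: "\<forall>i<n. \<forall>z. gf i z \<in> borel_measurable S"
    and f_deriv: "\<forall>i<n. \<forall>e\<in>space S. \<forall>z.
       ((\<lambda>w. f i w e) has_derivative (\<lambda>h. gf i z e \<bullet> h)) (at z)"
    and gf_lip: "\<forall>i<n. \<forall>e\<in>space S. \<forall>z w. norm (gf i z e - gf i w e) \<le> L * norm (z - w)"
    and f_int: "\<forall>i<n. \<forall>z. integrable M (\<lambda>\<omega>. f i z (\<xi> i \<omega>))"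
    and gf_int: "\<forall>i<n. \<forall>z. integrable M (\<lambda>\<omega>. gf i z (\<xi> i \<omega>))"
    and F_deriv: "\<forall>i<n. \<forall>z.
       ((\<lambda>w. prob_space.expectation M (\<lambda>\<omega>. f i w (\<xi> i \<omega>))) has_derivative
          (\<lambda>h. prob_space.expectation M (\<lambda>\<omega>. gf i z (\<xi> i \<omega>)) \<bullet> h)) (at z)"
    and F_lip: "\<forall>i<n. \<forall>z w.
       norm (prob_space.expectation M (\<lambda>\<omega>. gf i z (\<xi> i \<omega>))
             - prob_space.expectation M (\<lambda>\<omega>. gf i w (\<xi> i \<omega>))) \<le> L * norm (z - w)"
    and var_bound: "\<forall>i<n. \<forall>z\<in>X.
       prob_space.expectation M (\<lambda>\<omega>. (norm (prob_space.expectation M (\<lambda>\<omega>'. gf i z (\<xi> i \<omega>'))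
                                            - gf i z (\<xi> i \<omega>)))\<^sup>2) \<le> \<delta>\<^sup>2"
    and G_pos: "0 < G"
    and gf_sq_int: "\<forall>i<n. \<forall>z\<in>X. integrable M (\<lambda>\<omega>. (norm (gf i z (\<xi> i \<omega>)))\<^sup>2)"
    and gf_norm_int: "\<forall>i<n. \<forall>z\<in>X. integrable M (\<lambda>\<omega>. norm (gf i z (\<xi> i \<omega>)))"
    and G_sq: "\<forall>i<n. \<forall>z\<in>X. prob_space.expectation M (\<lambda>\<omega>. (norm (gf i z (\<xi> i \<omega>)))\<^sup>2) \<le> G\<^sup>2"
    and G_norm: "\<forall>i<n. \<forall>z\<in>X. prob_space.expectation M (\<lambda>\<omega>. norm (gf i z (\<xi> i \<omega>))) \<le> G"
    \<comment> \<open>i.i.d. samples\<close>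
    and samples_indep: "prob_space.indep_vars M (\<lambda>_. S) (\<lambda>(k, i). \<xi>s k i) ({1..} \<times> {..<n})"
    and samples_distr: "\<forall>k\<ge>1. \<forall>i<n. distr M S (\<xi>s k i) = distr M S (\<xi> i)"
    \<comment> \<open>step sizes\<close>
    and gamma_def: "\<forall>k. \<gamma> k = 2 / (real k + 1)"
    and eta_def: "\<forall>k. \<eta> k = 2 / (real k + 2)"
    \<comment> \<open>DMFW iterates\<close>
    and x1_in: "\<forall>i<n. x1 i \<in> X"
    and x_init: "\<forall>i<n. \<forall>\<omega>\<in>space M. x 1 i \<omega> = x1 i"
    and xh_def: "\<forall>k\<ge>1. \<forall>i<n. \<forall>\<omega>\<in>space M. xh k i \<omega> = (\<Sum>j<n. C $$ (i, j) *\<^sub>R x k j \<omega>)"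
    and y_init: "\<forall>i<n. \<forall>\<omega>\<in>space M. y 1 i \<omega> = gf i (xh 1 i \<omega>) (\<xi>s 1 i \<omega>)"
    and s_init: "\<forall>i<n. \<forall>\<omega>\<in>space M. s 1 i \<omega> = y 1 i \<omega>"
    and y_step: "\<forall>k\<ge>2. \<forall>i<n. \<forall>\<omega>\<in>space M.
       y k i \<omega> = (1 - \<gamma> k) *\<^sub>R y (k - 1) i \<omega> + gf i (xh k i \<omega>) (\<xi>s k i \<omega>)
                   - (1 - \<gamma> k) *\<^sub>R gf i (xh (k - 1) i \<omega>) (\<xi>s k i \<omega>)"
    and s_step: "\<forall>k\<ge>2. \<forall>i<n. \<forall>\<omega>\<in>space M.
       s k i \<omega> = (\<Sum>j<n. C $$ (i, j) *\<^sub>R s (k - 1) j \<omega>) + y k i \<omega> - y (k - 1) i \<omega>"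
    and p_def: "\<forall>k\<ge>1. \<forall>i<n. \<forall>\<omega>\<in>space M. p k i \<omega> = (\<Sum>j<n. C $$ (i, j) *\<^sub>R s k j \<omega>)"
    and theta_lmo: "\<forall>k\<ge>1. \<forall>i<n. \<forall>\<omega>\<in>space M.
       \<theta> k i \<omega> \<in> X \<and> (\<forall>\<phi>\<in>X. p k i \<omega> \<bullet> \<theta> k i \<omega> \<le> p k i \<omega> \<bullet> \<phi>)"
    and theta_meas: "\<forall>k\<ge>1. \<forall>i<n. \<theta> k i \<in> borel_measurable M"
    and x_step: "\<forall>k\<ge>1. \<forall>i<n. \<forall>\<omega>\<in>space M.
       x (k + 1) i \<omega> = xh k i \<omega> + \<eta> k *\<^sub>R (\<theta> k i \<omega> - xh k i \<omega>)"
  shows "\<forall>i<n. \<forall>k\<ge>1.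
     (\<integral>\<^sup>+ \<omega>. ennreal (norm (y k i \<omega>)) \<partial>M)
       \<le> ennreal (max (Max ((\<lambda>j. prob_space.expectation M (\<lambda>\<omega>. norm (y 1 j \<omega>))) ` {..<n}))
                        (2 * G + 2 * L * (D + 2 * (real (k0_of (second_eig_mod C)) * sqrt (real n) * D))))"
proof -
  interpret P: prob_space M by (rule M)
  define r where "r = \<bar>second_eig_mod C\<bar>"
  define k0 where "k0 = k0_of (second_eig_mod C)"
  have k0p: "0 < k0" "r \<le> (real k0 / (real k0 + 1))\<^sup>2"
    using k0_exists[OF lam_lt1] unfolding r_def k0_def by auto
  define B where "B = 2*D + 8*(real k0 * sqrt (real n) * D)"
  have cons: "(\<forall>k\<ge>1. \<forall>i<n. xh k i \<omega> \<in> X) \<and> (\<forall>m\<ge>1. \<forall>i<n. real m * norm (xh (m+1) i \<omega> - xh m i \<omega>) \<le> B)"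
    if \<omega>: "\<omega> \<in> space M" for \<omega>
    unfolding B_def
    apply (rule consensus[where xx="\<lambda>k j. x k j \<omega>" and xh="\<lambda>k j. xh k j \<omega>" and th="\<lambda>k j. \<theta> k j \<omega>"
          and c="\<lambda>i j. C $$ (i,j)" and r=r and kk=k0 and X=X and D=D and n=n])
    subgoal using n_pos .
    subgoal using C_nonneg by blast
    subgoal using C_row by blast
    subgoal using C_col by blast
    subgoal using contr unfolding r_def by blast
    subgoal unfolding r_def by simp
    subgoal using k0p by simp
    subgoal using k0p by simp
    subgoal using X_convex .
    subgoal using X_diam .
    subgoal using x_init x1_in \<omega> by simp
    subgoal using xh_def \<omega> by simp
    subgoal using theta_lmo \<omega> by simp
    subgoal using x_step eta_def \<omega> by simp
    done
  obtain \<omega>0 where \<omega>0: "\<omega>0 \<in> space M" using P.not_empty by blast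
  have L0: "0 \<le> L"
  proof -
    obtain b :: 'a where b: "b \<in> Basis" using nonempty_Basis by blast
    have xm: "\<xi> 0 \<in> measurable M S" using xi_rv n_pos by blast
    have e0: "\<xi> 0 \<omega>0 \<in> space S" using measurable_space[OF xm \<omega>0] .
    have "norm (gf 0 b (\<xi> 0 \<omega>0) - gf 0 0 (\<xi> 0 \<omega>0)) \<le> L * norm (b - 0)"
      using gf_lip[rule_format, OF n_pos e0] .
    then show ?thesis using b by (simp add: norm_Basis) (smt (verit) norm_ge_zero)
  qed
  obtain xs where xs: "xs \<in> X" using X_ne by blast
  have D0: "0 \<le> D" using X_diam xs by (metis norm_ge_zero order_trans)
  have xis_meas: "\<xi>s k j \<in> measurable M S" if "k \<ge> 1" "j < n" for k j
  proof -
    have "\<forall>ij\<in>{1..} \<times> {..<n}. (\<lambda>(k, i). \<xi>s k i) ij \<in> measurable M S"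
      using samples_indep unfolding P.indep_vars_def2 by blast
    then show ?thesis using that by force
  qed
  have intg: "integrable M (\<lambda>\<omega>. norm (gf j z (\<xi>s k j \<omega>))) \<and>
      P.expectation (\<lambda>\<omega>. norm (gf j z (\<xi>s k j \<omega>))) = P.expectation (\<lambda>\<omega>. norm (gf j z (\<xi> j \<omega>)))"
    if z: "z \<in> X" and k: "k \<ge> 1" and j: "j < n" for z k j
  proof -
    have m1: "\<xi>s k j \<in> measurable M S" using xis_meas k j .
    have m2: "\<xi> j \<in> measurable M S" using xi_rv j by blast
    have gm[measurable]: "gf j z \<in> borel_measurable S" using gf_meas j by blast
    have f: "(\<lambda>e. norm (gf j z e)) \<in> borel_measurable S" by measurable
    have dd: "distr M S (\<xi>s k j) = distr M S (\<xi> j)" using samples_distr k j by blast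
    have "integrable M (\<lambda>\<omega>. norm (gf j z (\<xi>s k j \<omega>)))"
      using integrable_distr_eq[OF m1 f] integrable_distr_eq[OF m2 f] dd gf_norm_int z j by simp
    moreover have "P.expectation (\<lambda>\<omega>. norm (gf j z (\<xi>s k j \<omega>))) = P.expectation (\<lambda>\<omega>. norm (gf j z (\<xi> j \<omega>)))"
      using integral_distr[OF m1 f] integral_distr[OF m2 f] dd by simp
    ultimately show ?thesis by blast
  qed
  define psi where "psi = max (Max ((\<lambda>j. prob_space.expectation M (\<lambda>\<omega>. norm (y 1 j \<omega>))) ` {..<n}))
                        (2 * G + 2 * L * (D + 2 * (real (k0_of (second_eig_mod C)) * sqrt (real n) * D)))"
  show ?thesis
  proof (rule allI, rule impI)
    fix i :: nat assume i: "i < n"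
    define w1 where "w1 = (\<Sum>j<n. C $$ (i, j) *\<^sub>R x1 j)"
    have w1X: "w1 \<in> X" unfolding w1_def
      using convex_sum[of "{..<n}" X "\<lambda>j. C $$ (i, j)" x1] X_convex C_nonneg C_row x1_in i by auto
    have y1eq: "y 1 i \<omega> = gf i w1 (\<xi>s 1 i \<omega>)" if \<omega>: "\<omega> \<in> space M" for \<omega>
    proof -
      have "xh 1 i \<omega> = w1" unfolding w1_def using xh_def x_init \<omega> i by simp
      then show ?thesis using y_init \<omega> i by simp
    qed
    define h where "h k \<omega> = (if k = 1 then norm (gf i w1 (\<xi>s 1 i \<omega>)) else norm (gf i xs (\<xi>s k i \<omega>)) + L * D)" for k \<omega>
    define q where "q k = (1 - \<gamma> k) * (L * (B / real (k - 1)))" for k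
    have "\<forall>k\<ge>1. (\<integral>\<^sup>+ \<omega>. ennreal (norm (y k i \<omega>)) \<partial>M) \<le> ennreal psi"
    proof (rule rec_bound[where h=h and g=\<gamma> and q=q])
      show "prob_space M" by (rule M)
      show "\<forall>k\<ge>1. integrable M (h k)"
      proof (intro allI impI)
        fix k :: nat assume k: "k \<ge> 1"
        show "integrable M (h k)"
        proof (cases "k = 1")
          case True
          then show ?thesis unfolding h_def using intg[OF w1X _ i, of 1] by simp
        next
          case False
          then show ?thesis unfolding h_def using intg[OF xs k i] by simp
        qed
      qed
      show "\<forall>k. \<forall>\<omega>\<in>space M. 0 \<le> norm (y k i \<omega>)" by simp
      show "\<forall>\<omega>\<in>space M. norm (y 1 i \<omega>) \<le> h 1 \<omega>" unfolding h_def using y1eq by simp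
      show "integral\<^sup>L M (h 1) \<le> psi"
      proof -
        have "integral\<^sup>L M (h 1) = integral\<^sup>L M (\<lambda>\<omega>. norm (gf i w1 (\<xi>s 1 i \<omega>)))"
          unfolding h_def by simp
        also have "\<dots> = P.expectation (\<lambda>\<omega>. norm (y 1 i \<omega>))"
          using y1eq by (intro Bochner_Integration.integral_cong) auto
        also have "\<dots> \<le> Max ((\<lambda>j. prob_space.expectation M (\<lambda>\<omega>. norm (y 1 j \<omega>))) ` {..<n})"
          using i by (intro Max_ge) auto
        also have "\<dots> \<le> psi" unfolding psi_def by simp
        finally show ?thesis .
      qed
      show "\<forall>k\<ge>2. \<forall>\<omega>\<in>space M. norm (y k i \<omega>) \<le> (1 - \<gamma> k) * norm (y (k - 1) i \<omega>) + \<gamma> k * h k \<omega> + q k"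
      proof (intro allI impI ballI)
        fix k :: nat and \<omega> assume k: "k \<ge> 2" and \<omega>: "\<omega> \<in> space M"
        define a where "a = xh k i \<omega>"
        define b where "b = xh (k - 1) i \<omega>"
        define e where "e = \<xi>s k i \<omega>"
        have eS: "e \<in> space S" unfolding e_def using measurable_space[OF xis_meas[of k i] \<omega>] k i by simp
        have g01: "0 \<le> \<gamma> k" "\<gamma> k \<le> 1" using gamma_def k by auto
        have c1: "\<forall>k\<ge>1. \<forall>i<n. xh k i \<omega> \<in> X" using cons[OF \<omega>] by (rule conjunct1)
        have c2: "\<forall>m\<ge>1. \<forall>i<n. real m * norm (xh (m+1) i \<omega> - xh m i \<omega>) \<le> B"
          using cons[OF \<omega>] by (rule conjunct2)
        have k1': "1 \<le> k" "1 \<le> k - 1" using k by auto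
        have aX: "a \<in> X" unfolding a_def using c1[rule_format, OF k1'(1) i] .
        have kk: "k - 1 + 1 = k" using k by simp
        have ab: "real (k - 1) * norm (a - b) \<le> B"
          using c2[rule_format, OF k1'(2) i] unfolding a_def b_def kk .
        have k1: "real (k - 1) > 0" using k by simp
        have ab': "norm (a - b) \<le> B / real (k - 1)" using ab k1 by (simp add: field_simps mult.commute)
        have ga: "norm (gf i a e) \<le> norm (gf i xs e) + L * D"
        proof -
          have "norm (gf i a e - gf i xs e) \<le> L * norm (a - xs)" using gf_lip i eS by blast
          also have "\<dots> \<le> L * D" using X_diam aX xs L0 by (intro mult_left_mono) auto
          finally show ?thesis by (smt (verit) norm_triangle_ineq2)
        qed
        have gab: "norm (gf i a e - gf i b e) \<le> L * (B / real (k - 1))"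
        proof -
          have "norm (gf i a e - gf i b e) \<le> L * norm (a - b)" using gf_lip i eS by blast
          also have "\<dots> \<le> L * (B / real (k - 1))" using ab' L0 by (intro mult_left_mono) auto
          finally show ?thesis .
        qed
        have "y k i \<omega> = (1 - \<gamma> k) *\<^sub>R y (k - 1) i \<omega> + \<gamma> k *\<^sub>R gf i a e + (1 - \<gamma> k) *\<^sub>R (gf i a e - gf i b e)"
          using y_step k i \<omega> unfolding a_def b_def e_def by (simp add: algebra_simps)
        then have "norm (y k i \<omega>) \<le> (1 - \<gamma> k) * norm (y (k - 1) i \<omega>) + \<gamma> k * norm (gf i a e) + (1 - \<gamma> k) * norm (gf i a e - gf i b e)"
          using g01 by (smt (verit) norm_scaleR norm_triangle_ineq abs_of_nonneg)
        also have "\<dots> \<le> (1 - \<gamma> k) * norm (y (k - 1) i \<omega>) + \<gamma> k * (norm (gf i xs e) + L * D) + (1 - \<gamma> k) * (L * (B / real (k - 1)))"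
          using ga gab g01 by (intro add_mono mult_left_mono) auto
        also have "\<dots> = (1 - \<gamma> k) * norm (y (k - 1) i \<omega>) + \<gamma> k * h k \<omega> + q k"
          unfolding h_def q_def e_def using k by simp
        finally show "norm (y k i \<omega>) \<le> (1 - \<gamma> k) * norm (y (k - 1) i \<omega>) + \<gamma> k * h k \<omega> + q k" .
      qed
      show "\<forall>k\<ge>2. 0 \<le> \<gamma> k \<and> \<gamma> k \<le> 1" using gamma_def by auto
      show "\<forall>k\<ge>2. \<gamma> k * integral\<^sup>L M (h k) + q k \<le> \<gamma> k * psi"
      proof (intro allI impI)
        fix k :: nat assume k: "k \<ge> 2"
        define Ex where "Ex = P.expectation (\<lambda>\<omega>. norm (gf i xs (\<xi>s k i \<omega>)))"
        have iE: "integrable M (\<lambda>\<omega>. norm (gf i xs (\<xi>s k i \<omega>)))" using intg[OF xs _ i, of k] k by simp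
        have ExG: "Ex \<le> G" unfolding Ex_def using intg[OF xs _ i, of k] k G_norm xs i by simp
        have Ex0: "0 \<le> Ex" unfolding Ex_def by simp
        have ih: "integral\<^sup>L M (h k) = Ex + L * D"
          unfolding h_def Ex_def using k iE by (simp add: P.prob_space)
        have k1: "real (k - 1) = real k - 1" using k by simp
        have gk: "\<gamma> k = 2 / (real k + 1)" using gamma_def by blast
        have qk: "q k = L * B / (real k + 1)"
        proof -
          define u where "u = real k - 1"
          have km: "u \<noteq> 0" "real k + 1 \<noteq> 0" using k by (auto simp: u_def)
          have a1: "1 - 2/(real k+1) = u/(real k + 1)" using km by (simp add: field_simps u_def)
          have "u/(real k + 1) * (L * (B / u)) = L * B / (real k + 1)" using km by (simp add: field_simps)
          then show ?thesis unfolding q_def gk k1 a1 u_def .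
        qed
        have key: "2 * (Ex + L * D) + L * B \<le> 2 * psi"
        proof -
          have "2 * G + 2 * L * (D + 2 * (real k0 * sqrt (real n) * D)) \<le> psi"
            unfolding psi_def k0_def by simp
          moreover have "L * B = 2 * L * D + 8 * L * (real k0 * sqrt (real n) * D)"
            unfolding B_def by (simp add: algebra_simps)
          ultimately show ?thesis using ExG G_pos by (simp add: algebra_simps)
        qed
        have "\<gamma> k * integral\<^sup>L M (h k) + q k = (2 * (Ex + L * D) + L * B) / (real k + 1)"
          unfolding ih qk gk by (simp add: add_divide_distrib)
        also have "\<dots> \<le> 2 * psi / (real k + 1)" using key by (intro divide_right_mono) auto
        also have "\<dots> = \<gamma> k * psi" unfolding gk by simp
        finally show "\<gamma> k * integral\<^sup>L M (h k) + q k \<le> \<gamma> k * psi" .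
      qed
    qed
    then show "\<forall>k\<ge>1. (\<integral>\<^sup>+ \<omega>. ennreal (norm (y k i \<omega>)) \<partial>M)
       \<le> ennreal (max (Max ((\<lambda>j. prob_space.expectation M (\<lambda>\<omega>. norm (y 1 j \<omega>))) ` {..<n}))
                        (2 * G + 2 * L * (D + 2 * (real (k0_of (second_eig_mod C)) * sqrt (real n) * D))))"
      unfolding psi_def .
  qed
qed

end
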